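(* Fix an agent $k$ and coefficients $W_{i,j}\in[-1,1]$, $i,j\in[m_k]$, and suppose there are $\varepsilon',\varepsilon''\ge0$ such that $W_{i,i}\ge\max\{W_{i,j}-\varepsilon',-\varepsilon''\}$ for all $i,j\in[m_k]$. Let $(q^*_{i,j})_{i,j\in[m_k]}$ be an optimal solution of the program $(P^3)$ with these coefficients. Then for all $i,j\in[m_k]$: if $q^*_{i,j}>0$ then $W_{i,j}\ge W_{i,i}-m\varepsilon'-\sqrt2\,m\gamma$.
   Context: Agent $k$ has a finite type support $\{t_k^{(1)},\dots,t_k^{(m_k)}\}$ with probabilities $F_i>0$ summing to 1; $m=\max_{k'}m_{k'}$ (so $m\ge m_k$). With $\gamma>0$ and $\phi(\mathbf{q})=\frac12\gamma\|\mathbf{q}\|_2^2$, program $(P^3)$: maximize $\sum_i F_i(\sum_j W_{i,j}q_{i,j}-\phi(\mathbf{q}_i))$ subject to $\sum_j q_{i,j}=1$ for all $i$, $\sum_iF_iq_{i,j}=F_j$ for all $j$, $q_{i,j}\ge0$, where $\mathbf{q}_i=(q_{i,j})_j$. *)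

theory Defs
  imports Complex_Main
begin

text \<open>Types of agent k are indexed by {..<n} (n = m_k). F is the type distribution,
 W the coefficient matrix, q a candidate solution of program (P^3).\<close>

definition phi :: "real \<Rightarrow> nat \<Rightarrow> (nat \<Rightarrow> real) \<Rightarrow> real" where
  "phi \<gamma> n v = (1/2) * \<gamma> * (\<Sum>j<n. (v j)^2)"

definition P3_feasible :: "nat \<Rightarrow> (nat \<Rightarrow> real) \<Rightarrow> (nat \<Rightarrow> nat \<Rightarrow> real) \<Rightarrow> bool" where
  "P3_feasible n F q \<longleftrightarrow>
     (\<forall>i<n. (\<Sum>j<n. q i j) = 1) \<and>
     (\<forall>j<n. (\<Sum>i<n. F i * q i j) = F j) \<and>
     (\<forall>i<n. \<forall>j<n. q i j \<ge> 0)"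

definition P3_objective :: "nat \<Rightarrow> (nat \<Rightarrow> real) \<Rightarrow> (nat \<Rightarrow> nat \<Rightarrow> real) \<Rightarrow> real
    \<Rightarrow> (nat \<Rightarrow> nat \<Rightarrow> real) \<Rightarrow> real" where
  "P3_objective n F W \<gamma> q = (\<Sum>i<n. F i * ((\<Sum>j<n. W i j * q i j) - phi \<gamma> n (q i)))"

definition P3_optimal :: "nat \<Rightarrow> (nat \<Rightarrow> real) \<Rightarrow> (nat \<Rightarrow> nat \<Rightarrow> real) \<Rightarrow> real
    \<Rightarrow> (nat \<Rightarrow> nat \<Rightarrow> real) \<Rightarrow> bool" where
  "P3_optimal n F W \<gamma> q \<longleftrightarrow> P3_feasible n F q \<and>
     (\<forall>q'. P3_feasible n F q' \<longrightarrow> P3_objective n F W \<gamma> q' \<le> P3_objective n F W \<gamma> q)"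

end

theory Submission
  imports Defs
begin




inductive pwalk :: "nat \<Rightarrow> (nat \<Rightarrow> nat \<Rightarrow> real) \<Rightarrow> nat \<Rightarrow> nat \<Rightarrow> (nat \<Rightarrow> nat \<Rightarrow> nat) \<Rightarrow> nat \<Rightarrow> bool"
  for n q where
  w0: "a < n \<Longrightarrow> pwalk n q a a (\<lambda>_ _. 0) 0"
| wS: "pwalk n q a b N k \<Longrightarrow> c < n \<Longrightarrow> q b c > 0 \<Longrightarrow>
       pwalk n q a c (\<lambda>x y. N x y + (if x = b \<and> y = c then 1 else 0)) (Suc k)"

lemma pwalk_props:
  assumes "pwalk n q a b N k"
  shows "a < n \<and> b < n \<and> (\<forall>x y. N x y > 0 \<longrightarrow> x < n \<and> y < n \<and> q x y > 0)
    \<and> (\<Sum>x<n. \<Sum>y<n. N x y) = k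
    \<and> (\<forall>c<n. (\<Sum>y<n. N c y) + (if c = b then 1 else 0) = (\<Sum>x<n. N x c) + (if c = a then 1 else 0))"
  using assms
proof (induction rule: pwalk.induct)
  case (w0 a)
  then show ?case by simp
next
  case (wS a b N k c)
  have s1: "(\<Sum>x<n. \<Sum>y<n. N x y + (if x = b \<and> y = c then 1 else 0)) = (\<Sum>x<n. \<Sum>y<n. N x y) + 1"
  proof -
    have "(\<Sum>x<n. \<Sum>y<n. (if x = b \<and> y = c then 1 else 0)::nat) = (\<Sum>x<n. if x = b then 1 else 0)"
      using wS by (intro sum.cong) auto
    also have "\<dots> = 1" using wS by simp
    finally show ?thesis by (simp add: sum.distrib)
  qed
  have s2: "(\<Sum>y<n. N d y + (if d = b \<and> y = c then 1 else 0)) = (\<Sum>y<n. N d y) + (if d = b then 1 else 0)" for d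
    using wS by (simp add: sum.distrib)
  have s3: "(\<Sum>x<n. N x d + (if x = b \<and> d = c then 1 else 0)) = (\<Sum>x<n. N x d) + (if d = c then 1 else 0)" for d
    using wS by (simp add: sum.distrib)
  show ?case using wS s1 s2 s3 by (auto split: if_splits)
qed

lemma closed_flow:
  fixes F :: "nat \<Rightarrow> real"
  assumes feas: "P3_feasible n F q" and Fpos: "\<forall>i<n. F i > 0"
    and Ssub: "S \<subseteq> {..<n}" and closed: "\<forall>a\<in>S. \<forall>b<n. q a b > 0 \<longrightarrow> b \<in> S"
    and jS: "j \<in> S" and ij: "i < n" "j < n" and qij: "q i j > 0"
  shows "i \<in> S"
proof (rule ccontr)
  assume iS: "i \<notin> S"
  define T where "T = {..<n} - S"
  have rows: "\<forall>i<n. (\<Sum>j<n. q i j) = 1" and cols: "\<forall>j<n. (\<Sum>i<n. F i * q i j) = F j"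
    and qnn: "\<forall>i<n. \<forall>j<n. q i j \<ge> 0" using feas unfolding P3_feasible_def by auto
  have fS: "finite S" using Ssub finite_subset by blast
  have split: "sum g {..<n} = sum g T + sum g S" for g :: "nat \<Rightarrow> real"
    unfolding T_def by (rule sum.subset_diff[OF Ssub], simp)
  have A: "(\<Sum>b\<in>S. F b) = (\<Sum>a\<in>S. \<Sum>b\<in>S. F a * q a b) + (\<Sum>a\<in>T. \<Sum>b\<in>S. F a * q a b)"
  proof -
    have "(\<Sum>b\<in>S. F b) = (\<Sum>b\<in>S. \<Sum>a<n. F a * q a b)"
      using cols Ssub by (intro sum.cong) auto
    also have "\<dots> = (\<Sum>a<n. \<Sum>b\<in>S. F a * q a b)" by (rule sum.swap)
    also have "\<dots> = (\<Sum>a\<in>T. \<Sum>b\<in>S. F a * q a b) + (\<Sum>a\<in>S. \<Sum>b\<in>S. F a * q a b)" by (rule split)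
    finally show ?thesis by simp
  qed
  have B: "(\<Sum>a\<in>S. F a) = (\<Sum>a\<in>S. \<Sum>b\<in>S. F a * q a b)"
  proof (rule sum.cong[OF refl])
    fix a assume aS: "a \<in> S"
    then have an: "a < n" using Ssub by auto
    have z: "(\<Sum>b\<in>T. F a * q a b) = 0"
    proof (rule sum.neutral, rule ballI)
      fix b assume "b \<in> T"
      then have "b < n" "b \<notin> S" unfolding T_def by auto
      then have "q a b = 0" using closed aS qnn an by force
      then show "F a * q a b = 0" by simp
    qed
    have "F a = F a * (\<Sum>b<n. q a b)" using rows an by simp
    also have "\<dots> = (\<Sum>b<n. F a * q a b)" by (simp add: sum_distrib_left)
    also have "\<dots> = (\<Sum>b\<in>T. F a * q a b) + (\<Sum>b\<in>S. F a * q a b)" by (rule split)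
    finally show "F a = (\<Sum>b\<in>S. F a * q a b)" using z by simp
  qed
  have Z: "(\<Sum>a\<in>T. \<Sum>b\<in>S. F a * q a b) = 0" using A B by simp
  have iT: "i \<in> T" using iS ij unfolding T_def by auto
  have fT: "finite T" unfolding T_def by simp
  have nn: "\<forall>a\<in>T. \<forall>b\<in>S. F a * q a b \<ge> 0"
    using Fpos qnn Ssub unfolding T_def by (auto intro!: mult_nonneg_nonneg simp: less_imp_le subset_iff)
  have "F i * q i j \<le> (\<Sum>b\<in>S. F i * q i b)"
    using jS fS nn iT by (intro member_le_sum) auto
  also have "\<dots> \<le> (\<Sum>a\<in>T. \<Sum>b\<in>S. F a * q a b)"
    using iT fT nn by (intro member_le_sum[where f = "\<lambda>a. \<Sum>b\<in>S. F a * q a b"]) (auto intro: sum_nonneg)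
  finally have "F i * q i j \<le> 0" using Z by simp
  moreover have "F i * q i j > 0" using Fpos ij qij by simp
  ultimately show False by simp
qed



lemma obj_expand:
  "P3_objective n F W \<gamma> (\<lambda>a b. q a b + \<delta> * D a b) = P3_objective n F W \<gamma> q
     + \<delta> * (\<Sum>a<n. F a * (\<Sum>b<n. (W a b - \<gamma> * q a b) * D a b))
     - \<delta>^2 * (\<gamma>/2 * (\<Sum>a<n. F a * (\<Sum>b<n. (D a b)^2)))"
proof -
  have "F a * ((\<Sum>b<n. W a b * (q a b + \<delta> * D a b)) - phi \<gamma> n (\<lambda>b. q a b + \<delta> * D a b))
      = F a * ((\<Sum>b<n. W a b * q a b) - phi \<gamma> n (q a))
        + \<delta> * (F a * (\<Sum>b<n. (W a b - \<gamma> * q a b) * D a b))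
        - \<delta>^2 * (\<gamma>/2 * (F a * (\<Sum>b<n. (D a b)^2)))" for a
  proof -
    have e1: "(\<Sum>b<n. W a b * (q a b + \<delta> * D a b)) = (\<Sum>b<n. W a b * q a b) + \<delta> * (\<Sum>b<n. W a b * D a b)"
      by (simp add: algebra_simps sum.distrib sum_distrib_left)
    have e2: "(\<Sum>b<n. (q a b + \<delta> * D a b)^2) = (\<Sum>b<n. (q a b)^2) + 2 * \<delta> * (\<Sum>b<n. q a b * D a b) + \<delta>^2 * (\<Sum>b<n. (D a b)^2)"
      by (simp add: power2_sum algebra_simps sum.distrib sum_distrib_left)
    have e3: "(\<Sum>b<n. (W a b - \<gamma> * q a b) * D a b) = (\<Sum>b<n. W a b * D a b) - \<gamma> * (\<Sum>b<n. q a b * D a b)"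
      by (simp add: algebra_simps sum_subtractf sum_distrib_left)
    show ?thesis unfolding phi_def e1 e2 e3 by (simp add: algebra_simps power2_eq_square)
  qed
  then show ?thesis unfolding P3_objective_def
    by (simp add: sum.distrib sum_subtractf sum_distrib_left)
qed

lemma perturb:
  fixes N :: "nat \<Rightarrow> nat \<Rightarrow> real"
  assumes Fpos: "\<forall>i<n. F i > 0" and gpos: "\<gamma> > 0" and opt: "P3_optimal n F W \<gamma> q"
    and Nnn: "\<forall>a b. N a b \<ge> 0" and Nsupp: "\<forall>a<n. \<forall>b<n. N a b > 0 \<longrightarrow> q a b > 0"
    and bal: "\<forall>c<n. (\<Sum>y<n. N c y) = (\<Sum>x<n. N x c)"
  shows "(\<Sum>a<n. \<Sum>b<n. N a b * ((W a a - \<gamma> * q a a) - (W a b - \<gamma> * q a b))) \<le> 0"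
proof -
  have feas: "P3_feasible n F q" using opt unfolding P3_optimal_def by auto
  have rows: "\<forall>i<n. (\<Sum>j<n. q i j) = 1" and cols: "\<forall>j<n. (\<Sum>i<n. F i * q i j) = F j"
    and qnn: "\<forall>i<n. \<forall>j<n. q i j \<ge> 0" using feas unfolding P3_feasible_def by auto
  define S where "S a = (\<Sum>c<n. N a c)" for a
  define D where "D a b = ((if a = b then S a else 0) - N a b) / F a" for a b
  define G where "G = (\<Sum>a<n. F a * (\<Sum>b<n. (W a b - \<gamma> * q a b) * D a b))"
  define Q where "Q = \<gamma>/2 * (\<Sum>a<n. F a * (\<Sum>b<n. (D a b)^2))"
  have Qnn: "Q \<ge> 0" unfolding Q_def using gpos Fpos
    by (intro mult_nonneg_nonneg sum_nonneg) (auto simp: less_imp_le)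
  have G_eq: "G = (\<Sum>a<n. \<Sum>b<n. N a b * ((W a a - \<gamma> * q a a) - (W a b - \<gamma> * q a b)))"
    unfolding G_def
  proof (rule sum.cong[OF refl])
    fix a assume an: "a \<in> {..<n}"
    have Fa: "F a > 0" using Fpos an by auto
    have "F a * (\<Sum>b<n. (W a b - \<gamma> * q a b) * D a b)
        = (\<Sum>b<n. (W a b - \<gamma> * q a b) * ((if a = b then S a else 0) - N a b))"
      unfolding D_def sum_distrib_left using Fa by (intro sum.cong) (auto simp: field_simps)
    also have "\<dots> = (\<Sum>b<n. (if a = b then (W a b - \<gamma> * q a b) * S a else 0)) - (\<Sum>b<n. (W a b - \<gamma> * q a b) * N a b)"
      unfolding sum_subtractf[symmetric] by (intro sum.cong) (auto simp: algebra_simps)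
    also have "\<dots> = (W a a - \<gamma> * q a a) * S a - (\<Sum>b<n. (W a b - \<gamma> * q a b) * N a b)"
      using an by (simp add: sum.delta)
    also have "\<dots> = (\<Sum>b<n. N a b * ((W a a - \<gamma> * q a a) - (W a b - \<gamma> * q a b)))"
      unfolding S_def sum_distrib_left sum_subtractf[symmetric] by (intro sum.cong) (auto simp: algebra_simps)
    finally show "F a * (\<Sum>b<n. (W a b - \<gamma> * q a b) * D a b) = (\<Sum>b<n. N a b * ((W a a - \<gamma> * q a a) - (W a b - \<gamma> * q a b)))" .
  qed
  define P where "P = {q a b * F a / N a b | a b. a < n \<and> b < n \<and> N a b > 0}"
  have finP: "finite P"
  proof -
    have "P \<subseteq> (\<lambda>(a,b). q a b * F a / N a b) ` ({..<n} \<times> {..<n})" unfolding P_def by auto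
    then show ?thesis by (rule finite_subset) simp
  qed
  have Ppos: "\<forall>x\<in>P. x > 0" unfolding P_def using Fpos Nsupp by auto
  define c0 where "c0 = Min (insert 1 P)"
  have c0pos: "c0 > 0" unfolding c0_def using finP Ppos by (subst Min_gr_iff) auto
  have c0le: "c0 \<le> q a b * F a / N a b" if "a < n" "b < n" "N a b > 0" for a b
    unfolding c0_def using finP that by (intro Min_le) (auto simp: P_def)
  have feas': "P3_feasible n F (\<lambda>a b. q a b + \<delta> * D a b)" if d0: "0 < \<delta>" "\<delta> \<le> c0" for \<delta>
    unfolding P3_feasible_def
  proof (intro conjI allI impI)
    fix a assume an: "a < n"
    have Fa: "F a > 0" using Fpos an by auto
    have "(\<Sum>b<n. D a b) = ((\<Sum>b<n. (if a = b then S a else 0)) - S a) / F a"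
      unfolding D_def S_def by (simp add: sum_divide_distrib[symmetric] sum_subtractf)
    also have "\<dots> = 0" using an by simp
    finally have "(\<Sum>b<n. D a b) = 0" .
    then show "(\<Sum>b<n. q a b + \<delta> * D a b) = 1" using rows an
      by (simp add: sum.distrib sum_distrib_left[symmetric])
  next
    fix b assume bn: "b < n"
    have "(\<Sum>a<n. F a * D a b) = (\<Sum>a<n. (if a = b then S a else 0) - N a b)"
      unfolding D_def using Fpos by (intro sum.cong) auto
    also have "\<dots> = S b - (\<Sum>a<n. N a b)" using bn by (simp add: sum_subtractf)
    also have "\<dots> = 0" using bal bn unfolding S_def by simp
    finally have z: "(\<Sum>a<n. F a * D a b) = 0" .
    have "(\<Sum>a<n. F a * (q a b + \<delta> * D a b)) = (\<Sum>a<n. F a * q a b) + \<delta> * (\<Sum>a<n. F a * D a b)"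
      by (simp add: algebra_simps sum.distrib sum_distrib_left)
    then show "(\<Sum>a<n. F a * (q a b + \<delta> * D a b)) = F b" using z cols bn by simp
  next
    fix a b assume an: "a < n" and bn: "b < n"
    have Fa: "F a > 0" using Fpos an by auto
    show "0 \<le> q a b + \<delta> * D a b"
    proof (cases "a = b")
      case True
      have "N a a \<le> S a" unfolding S_def using Nnn an by (intro member_le_sum) auto
      then have "D a b \<ge> 0" unfolding D_def using True Fa by simp
      then show ?thesis using qnn an bn d0 by simp
    next
      case False
      show ?thesis
      proof (cases "N a b > 0")
        case True
        have "\<delta> \<le> q a b * F a / N a b" using c0le[OF an bn True] d0 by simp
        then have "\<delta> * N a b \<le> q a b * F a" using True by (simp add: field_simps)
        then have "\<delta> * N a b / F a \<le> q a b" using Fa by (simp add: field_simps)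
        then show ?thesis unfolding D_def using False by simp
      next
        case False
        then have "N a b = 0" using Nnn[rule_format, of a b] by linarith
        then show ?thesis unfolding D_def using \<open>a \<noteq> b\<close> qnn an bn by simp
      qed
    qed
  qed
  have ineq: "\<delta> * G - \<delta>^2 * Q \<le> 0" if "0 < \<delta>" "\<delta> \<le> c0" for \<delta>
  proof -
    have "P3_objective n F W \<gamma> (\<lambda>a b. q a b + \<delta> * D a b) \<le> P3_objective n F W \<gamma> q"
      using opt feas'[OF that] unfolding P3_optimal_def by blast
    then show ?thesis unfolding obj_expand G_def Q_def by simp
  qed
  show ?thesis
  proof (rule ccontr)
    assume "\<not> ?thesis"
    then have Gp: "G > 0" using G_eq by simp
    define \<delta> where "\<delta> = min c0 (G / (Q + 1))"
    have dp: "\<delta> > 0" unfolding \<delta>_def using c0pos Gp Qnn by simp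
    have "\<delta> * G - \<delta>^2 * Q \<le> 0" using ineq dp unfolding \<delta>_def by simp
    then have "\<delta> * G \<le> \<delta> * (\<delta> * Q)" by (simp add: power2_eq_square algebra_simps)
    then have "G \<le> \<delta> * Q" using dp by simp
    also have "\<dots> \<le> G / (Q + 1) * Q" unfolding \<delta>_def using Qnn
      by (intro mult_right_mono) auto
    also have "\<dots> < G" using Gp Qnn by (simp add: field_simps)
    finally show False by simp
  qed
qed



theorem mainTheorem11:
  fixes n m :: nat and F :: "nat \<Rightarrow> real" and W q :: "nat \<Rightarrow> nat \<Rightarrow> real"
    and \<gamma> \<epsilon>1 \<epsilon>2 :: real
  assumes Fpos: "\<forall>i<n. F i > 0"
    and Fsum: "(\<Sum>i<n. F i) = 1"
    and mge: "m \<ge> n"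
    and gpos: "\<gamma> > 0"
    and Wbnd: "\<forall>i<n. \<forall>j<n. -1 \<le> W i j \<and> W i j \<le> 1"
    and e1: "\<epsilon>1 \<ge> 0" and e2: "\<epsilon>2 \<ge> 0"
    and diag: "\<forall>i<n. \<forall>j<n. W i i \<ge> max (W i j - \<epsilon>1) (- \<epsilon>2)"
    and opt: "P3_optimal n F W \<gamma> q"
  shows "\<forall>i<n. \<forall>j<n. q i j > 0 \<longrightarrow>
           W i j \<ge> W i i - real m * \<epsilon>1 - sqrt 2 * real m * \<gamma>"
proof (intro allI impI)
  fix i j assume ilt: "i < n" and jlt: "j < n" and qij: "q i j > 0"
  have feas: "P3_feasible n F q" using opt unfolding P3_optimal_def by auto
  have rows: "\<forall>i<n. (\<Sum>j<n. q i j) = 1"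
    and qnn: "\<forall>i<n. \<forall>j<n. q i j \<ge> 0" using feas unfolding P3_feasible_def by auto
  define L where "L k = {b. b < n \<and> (\<exists>N k'. k' \<le> k \<and> pwalk n q j b N k')}" for k
  have Lsub: "L k \<subseteq> {..<n}" for k unfolding L_def by auto
  have Lfin: "finite (L k)" for k using Lsub finite_subset by blast
  have Lmono: "L k \<subseteq> L (Suc k)" for k unfolding L_def by (auto intro: le_SucI)
  have j0: "j \<in> L 0" unfolding L_def using jlt pwalk.w0[of j n q] by auto
  have "\<exists>k<n. L (Suc k) = L k"
  proof (rule ccontr)
    assume "\<not> ?thesis"
    then have ne: "\<forall>k<n. L (Suc k) \<noteq> L k" by auto
    have "k \<le> n \<Longrightarrow> card (L k) \<ge> Suc k" for k
    proof (induction k)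
      case 0
      then show ?case using j0 Lfin[of 0] by (metis One_nat_def Suc_leI card_gt_0_iff empty_iff)
    next
      case (Suc k)
      have "L (Suc k) \<noteq> L k" using ne Suc.prems by simp
      then have "L k \<subset> L (Suc k)" using Lmono[of k] by blast
      then have "card (L k) < card (L (Suc k))" using Lfin psubset_card_mono by blast
      then show ?case using Suc by simp
    qed
    then have "card (L n) \<ge> Suc n" by simp
    moreover have "card (L n) \<le> n" using card_mono[OF _ Lsub, of n] by simp
    ultimately show False by simp
  qed
  then obtain k where kn: "k < n" and stab: "L (Suc k) = L k" by blast
  have closed: "\<forall>a\<in>L k. \<forall>b<n. q a b > 0 \<longrightarrow> b \<in> L k"
  proof (intro ballI allI impI)
    fix a b assume aL: "a \<in> L k" and bn: "b < n" and qab: "q a b > 0"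
    obtain N k' where "k' \<le> k" "pwalk n q j a N k'" using aL unfolding L_def by auto
    then have "Suc k' \<le> Suc k" "pwalk n q j b (\<lambda>x y. N x y + (if x = a \<and> y = b then 1 else 0)) (Suc k')"
      using pwalk.wS bn qab by auto
    then have "b \<in> L (Suc k)" unfolding L_def using bn by blast
    then show "b \<in> L k" using stab by simp
  qed
  have jk: "j \<in> L k" unfolding L_def using jlt pwalk.w0[of j n q] by blast
  have "i \<in> L k" by (rule closed_flow[OF feas Fpos Lsub closed jk ilt jlt qij])
  then obtain N k' where k'k: "k' \<le> k" and pw: "pwalk n q j i N k'" unfolding L_def by auto
  note pp = pwalk_props[OF pw]
  define N' where "N' a b = real (N a b) + (if a = i \<and> b = j then 1 else 0)" for a b
  define X where "X a b = (W a a - \<gamma> * q a a) - (W a b - \<gamma> * q a b)" for a b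
  have N'nn: "\<forall>a b. N' a b \<ge> 0" unfolding N'_def by simp
  have N'supp: "\<forall>a<n. \<forall>b<n. N' a b > 0 \<longrightarrow> q a b > 0"
    unfolding N'_def using pp qij by (auto split: if_splits)
  have N'bal: "\<forall>c<n. (\<Sum>y<n. N' c y) = (\<Sum>x<n. N' x c)"
  proof (intro allI impI)
    fix c assume cn: "c < n"
    have "(\<Sum>y<n. N' c y) = real (\<Sum>y<n. N c y) + (if c = i then 1 else 0)"
      unfolding N'_def using jlt by (simp add: sum.distrib)
    moreover have "(\<Sum>x<n. N' x c) = real (\<Sum>x<n. N x c) + (if c = j then 1 else 0)"
      unfolding N'_def using ilt by (simp add: sum.distrib)
    moreover have "(\<Sum>y<n. N c y) + (if c = i then 1 else 0) = (\<Sum>x<n. N x c) + (if c = j then 1 else 0)"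
      using pp[THEN conjunct2, THEN conjunct2, THEN conjunct2, THEN conjunct2] cn by simp
    then have "real ((\<Sum>y<n. N c y) + (if c = i then 1 else 0)) = real ((\<Sum>x<n. N x c) + (if c = j then 1 else 0))"
      by (rule arg_cong)
    then have "real (\<Sum>y<n. N c y) + (if c = i then 1 else 0) = real (\<Sum>x<n. N x c) + (if c = j then 1 else 0)"
      unfolding of_nat_add by (cases "c = i"; cases "c = j") simp_all
    ultimately show "(\<Sum>y<n. N' c y) = (\<Sum>x<n. N' x c)" by simp
  qed
  have P: "(\<Sum>a<n. \<Sum>b<n. N' a b * X a b) \<le> 0"
    using perturb[OF Fpos gpos opt N'nn N'supp N'bal] unfolding X_def by simp
  have split: "(\<Sum>a<n. \<Sum>b<n. N' a b * X a b) = (\<Sum>a<n. \<Sum>b<n. real (N a b) * X a b) + X i j"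
  proof -
    have "(\<Sum>a<n. \<Sum>b<n. N' a b * X a b) = (\<Sum>a<n. (\<Sum>b<n. real (N a b) * X a b) + (if a = i then X i j else 0))"
      unfolding N'_def using jlt by (intro sum.cong) (auto simp: algebra_simps sum.distrib if_distrib[of "\<lambda>t. X _ _ * t"] cong: if_cong)
    also have "\<dots> = (\<Sum>a<n. \<Sum>b<n. real (N a b) * X a b) + X i j"
      using ilt by (simp add: sum.distrib)
    finally show ?thesis .
  qed
  have Xlow: "X a b \<ge> - (\<epsilon>1 + \<gamma>)" if "a < n" "b < n" for a b
  proof -
    have "W a a \<ge> W a b - \<epsilon>1" using diag that by simp
    moreover have "q a a \<le> 1"
    proof -
      have "q a a \<le> (\<Sum>b<n. q a b)" using qnn that by (intro member_le_sum) auto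
      then show ?thesis using rows that by simp
    qed
    moreover have "q a b \<ge> 0" using qnn that by simp
    ultimately have "\<gamma> * q a a \<le> \<gamma> + \<gamma> * q a b"
    proof -
      assume h1: "q a a \<le> 1" and h2: "0 \<le> q a b"
      have "\<gamma> * q a a \<le> \<gamma> * 1" using h1 gpos by (intro mult_left_mono) auto
      moreover have "0 \<le> \<gamma> * q a b" using h2 gpos by simp
      ultimately show ?thesis by simp
    qed
    then show ?thesis unfolding X_def using \<open>W a a \<ge> W a b - \<epsilon>1\<close> by linarith
  qed
  have low1: "(\<Sum>a<n. \<Sum>b<n. real (N a b) * X a b) \<ge> (\<Sum>a<n. \<Sum>b<n. real (N a b) * (- (\<epsilon>1 + \<gamma>)))"
    using Xlow by (intro sum_mono mult_left_mono) auto
  have low2: "(\<Sum>a<n. \<Sum>b<n. real (N a b) * (- (\<epsilon>1 + \<gamma>))) = - (\<epsilon>1 + \<gamma>) * real k'"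
  proof -
    have ks: "(\<Sum>x<n. \<Sum>y<n. N x y) = k'"
      using pp[THEN conjunct2, THEN conjunct2, THEN conjunct2, THEN conjunct1] .
    have "real k' = (\<Sum>a<n. \<Sum>b<n. real (N a b))" unfolding ks[symmetric] by simp
    moreover have "(\<Sum>a<n. \<Sum>b<n. real (N a b) * (- (\<epsilon>1 + \<gamma>))) = (\<Sum>a<n. \<Sum>b<n. real (N a b)) * (- (\<epsilon>1 + \<gamma>))"
      by (simp add: sum_distrib_right)
    ultimately show ?thesis by simp
  qed
  have "X i j \<le> (\<epsilon>1 + \<gamma>) * real k'" 
  proof -
    have e: "(- (\<epsilon>1 + \<gamma>)) * real k' = - ((\<epsilon>1 + \<gamma>) * real k')" by (rule mult_minus_left)
    show ?thesis using P split low1 low2 unfolding e by linarith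
  qed
  moreover have "X i j \<ge> W i i - W i j - \<gamma>"
  proof -
    have "q i i \<le> 1"
    proof -
      have "q i i \<le> (\<Sum>b<n. q i b)" using qnn ilt by (intro member_le_sum) auto
      then show ?thesis using rows ilt by simp
    qed
    then have "\<gamma> * q i i \<le> \<gamma>" using gpos by simp
    moreover have "\<gamma> * q i j \<ge> 0" using gpos qij by simp
    ultimately show ?thesis unfolding X_def by linarith
  qed
  ultimately have b1: "W i i - W i j \<le> \<gamma> + (\<epsilon>1 + \<gamma>) * real k'" by linarith
  have km: "real k' + 1 \<le> real m" using k'k kn mge by linarith
  have "\<gamma> + (\<epsilon>1 + \<gamma>) * real k' \<le> real m * \<epsilon>1 + real m * \<gamma>"
  proof -
    have "\<epsilon>1 * real k' \<le> \<epsilon>1 * real m" using e1 km by (intro mult_left_mono) auto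
    moreover have "\<gamma> * (real k' + 1) \<le> \<gamma> * real m" using gpos km by (intro mult_left_mono) auto
    ultimately show ?thesis by (simp add: algebra_simps)
  qed
  moreover have "real m * \<gamma> \<le> sqrt 2 * real m * \<gamma>"
  proof -
    have "1 \<le> sqrt (2::real)" by simp
    then have "1 * (real m * \<gamma>) \<le> sqrt 2 * (real m * \<gamma>)" using gpos
      by (intro mult_right_mono) auto
    then show ?thesis by (simp add: mult.assoc)
  qed
  ultimately show "W i j \<ge> W i i - real m * \<epsilon>1 - sqrt 2 * real m * \<gamma>" using b1 by linarith
qed

end
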